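(* Consider the ordinary differential system \[ x'=-x+x^2+y^2,\qquad y'=y(x+y), \] and assume $|x(0)|\leq \varepsilon$, $|y(0)|\leq \delta\leq \varepsilon$. Then for $\varepsilon,\delta$ small enough there exists $c>0$ such that the solution of this system exists on a time interval $[0,T]$ with $T\geq c/\delta$.
   Context: $x,y$ are real-valued unknown functions of $t\geq 0$. The system is a toy model for the Euler–Korteweg system with small vorticity: $x$ plays the role of the dispersive part and $y$ that of the solenoidal part of the velocity. *)

theory Defs
  imports Complex_Main
begin

definition solves_on :: "real \<Rightarrow> (real \<Rightarrow> real) \<Rightarrow> (real \<Rightarrow> real) \<Rightarrow> bool" where
  "solves_on T x y \<longleftrightarrow>
     (\<forall>t\<in>{0..T}.
        (x has_real_derivative (- x t + (x t)^2 + (y t)^2)) (at t within {0..T}) \<and>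
        (y has_real_derivative (y t * (x t + y t))) (at t within {0..T}))"

end

theory Submission
  imports Defs "HOL-Analysis.Analysis"
begin


lemma lip_cont:
  fixes F :: "real \<Rightarrow> real \<Rightarrow> real"
  assumes lip: "\<And>p q p' q'. \<bar>F p q - F p' q'\<bar> \<le> L*(\<bar>p-p'\<bar>+\<bar>q-q'\<bar>)"
    and u: "continuous_on S u" and v: "continuous_on S v"
  shows "continuous_on S (\<lambda>s. F (u s) (v s))"
  unfolding continuous_on_def
proof
  fix t assume t: "t \<in> S"
  have "((\<lambda>s. L*(\<bar>u s - u t\<bar> + \<bar>v s - v t\<bar>)) \<longlongrightarrow> L*(\<bar>u t - u t\<bar> + \<bar>v t - v t\<bar>)) (at t within S)"
    using u v t unfolding continuous_on_def by (intro tendsto_intros) auto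
  then have z: "((\<lambda>s. L*(\<bar>u s - u t\<bar> + \<bar>v s - v t\<bar>)) \<longlongrightarrow> 0) (at t within S)" by simp
  have "((\<lambda>s. F (u s) (v s) - F (u t) (v t)) \<longlongrightarrow> 0) (at t within S)"
  proof (rule Lim_transform_bound[OF _ z])
    show "\<forall>\<^sub>F s in at t within S. norm (F (u s) (v s) - F (u t) (v t)) \<le> norm (L*(\<bar>u s - u t\<bar> + \<bar>v s - v t\<bar>))"
      using lip by (intro always_eventually allI) (smt (verit, best) real_norm_def)
  qed
  then show "((\<lambda>s. F (u s) (v s)) \<longlongrightarrow> F (u t) (v t)) (at t within S)"
    by (rule LIM_zero_cancel)
qed

lemma integral_pow:
  assumes "0 \<le> t"
  shows "integral {0..t} (\<lambda>s. C * s^n) = C * t^(Suc n) / Suc n"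
proof -
  have "((\<lambda>s. C * s^n) has_integral ((\<lambda>s. C * s^(Suc n) / Suc n) t - (\<lambda>s. C * s^(Suc n) / Suc n) 0)) {0..t}"
    apply (rule fundamental_theorem_of_calculus[OF assms])
    apply (rule has_real_derivative_iff_has_vector_derivative[THEN iffD1])
  proof -
    fix x
    have "((\<lambda>s. C * s^(Suc n) / Suc n) has_real_derivative C * (real (Suc n) * x^(Suc n - 1)) / Suc n) (at x within {0..t})"
      using DERIV_cdivide[OF DERIV_cmult[OF DERIV_pow[of "Suc n" x "{0..t}"]], of C "real (Suc n)"] by simp
    then show "((\<lambda>s. C * s^(Suc n) / Suc n) has_real_derivative C * x^n) (at x within {0..t})"
      by (simp del: of_nat_Suc)
  qed
  then show ?thesis by (intro integral_unique) simp
qed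

lemma tail_bound:
  fixes d bn :: "nat \<Rightarrow> real"
  assumes db: "\<And>k. \<bar>d k\<bar> \<le> bn k" and sb: "summable bn"
  shows "\<bar>suminf d - (\<Sum>k<n. d k)\<bar> \<le> suminf bn - (\<Sum>k<n. bn k)"
proof -
  have sa: "summable (\<lambda>k. \<bar>d k\<bar>)" using db sb by (intro summable_rabs_comparison_test) auto
  have sd: "summable d" using sa by (rule summable_rabs_cancel)
  have "suminf d - (\<Sum>k<n. d k) = (\<Sum>k. d (k + n))" using suminf_minus_initial_segment[OF sd] by simp
  also have "\<bar>\<dots>\<bar> \<le> (\<Sum>k. \<bar>d (k + n)\<bar>)"
    by (rule summable_rabs) (use sa summable_iff_shift[of "\<lambda>k. \<bar>d k\<bar>" n] in simp)
  also have "\<dots> \<le> (\<Sum>k. bn (k + n))"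
    by (rule suminf_le) (use db sa sb summable_iff_shift[of "\<lambda>k. \<bar>d k\<bar>" n] summable_iff_shift[of bn n] in auto)
  also have "\<dots> = suminf bn - (\<Sum>k<n. bn k)" using suminf_minus_initial_segment[OF sb] by simp
  finally show ?thesis .
qed

fun pic :: "(real \<Rightarrow> real \<Rightarrow> real) \<Rightarrow> (real \<Rightarrow> real \<Rightarrow> real) \<Rightarrow> real \<Rightarrow> real \<Rightarrow> nat \<Rightarrow> real \<Rightarrow> real \<times> real" where
  "pic f g a b 0 = (\<lambda>t. (a, b))"
| "pic f g a b (Suc n) = (\<lambda>t. (a + integral {0..t} (\<lambda>s. f (fst (pic f g a b n s)) (snd (pic f g a b n s))),
                                 b + integral {0..t} (\<lambda>s. g (fst (pic f g a b n s)) (snd (pic f g a b n s)))))"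

context
  fixes f g :: "real \<Rightarrow> real \<Rightarrow> real" and L a b T :: real
  assumes L: "L \<ge> 0" and T: "T \<ge> 0"
    and lipf: "\<And>p q p' q'. \<bar>f p q - f p' q'\<bar> \<le> L*(\<bar>p-p'\<bar>+\<bar>q-q'\<bar>)"
    and lipg: "\<And>p q p' q'. \<bar>g p q - g p' q'\<bar> \<le> L*(\<bar>p-p'\<bar>+\<bar>q-q'\<bar>)"
begin

abbreviation "X n s \<equiv> fst (pic f g a b n s)"
abbreviation "Y n s \<equiv> snd (pic f g a b n s)"

lemma pic_cont: "continuous_on {0..T} (X n) \<and> continuous_on {0..T} (Y n)"
proof (induction n)
  case 0
  then show ?case by simp
next
  case (Suc n)
  then have cf: "continuous_on {0..T} (\<lambda>s. f (X n s) (Y n s))"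
    and cg: "continuous_on {0..T} (\<lambda>s. g (X n s) (Y n s))"
    using lip_cont[OF lipf] lip_cont[OF lipg] by auto
  show ?case
    using indefinite_integral_continuous_1[OF integrable_continuous_interval[OF cf]]
      indefinite_integral_continuous_1[OF integrable_continuous_interval[OF cg]]
    by (auto intro!: continuous_intros)
qed

lemma pic_cont_sub: "t \<le> T \<Longrightarrow> continuous_on {0..t} (X n) \<and> continuous_on {0..t} (Y n)"
  using pic_cont[of n] by (auto intro: continuous_on_subset)

lemma cf_sub: "t \<le> T \<Longrightarrow> continuous_on {0..t} (\<lambda>s. f (X n s) (Y n s)) \<and> continuous_on {0..t} (\<lambda>s. g (X n s) (Y n s))"
  using pic_cont_sub[of t n] lip_cont[OF lipf] lip_cont[OF lipg] by auto

definition "M0 = \<bar>f a b\<bar> + \<bar>g a b\<bar>"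

lemma pic_est:
  "t \<in> {0..T} \<Longrightarrow> \<bar>X (Suc n) t - X n t\<bar> + \<bar>Y (Suc n) t - Y n t\<bar> \<le> M0 * (2*L)^n * t^(Suc n) / fact (Suc n)"
proof (induction n arbitrary: t)
  case 0
  then show ?case by (simp add: M0_def abs_mult algebra_simps)
next
  case (Suc n)
  have t: "0 \<le> t" "t \<le> T" using Suc.prems by auto
  define C where "C = M0 * (2*L)^n / fact (Suc n)"
  have C: "C \<ge> 0" unfolding C_def M0_def using L by auto
  have bnd: "\<And>s. s \<in> {0..t} \<Longrightarrow> \<bar>X (Suc n) s - X n s\<bar> + \<bar>Y (Suc n) s - Y n s\<bar> \<le> C * s^(Suc n)"
    using Suc.IH t unfolding C_def by auto
  note c1 = cf_sub[OF t(2), of "Suc n"] and c0 = cf_sub[OF t(2), of n]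
  note ct = pic_cont_sub[OF t(2), of n] pic_cont_sub[OF t(2), of "Suc n"]
  have ie: "integral {0..t} (\<lambda>s. L * (C * s^(Suc n))) = L * C * t^(Suc (Suc n)) / Suc (Suc n)"
    using integral_pow[OF t(1), of "L*C" "Suc n"] by (simp add: mult.assoc)
  have i1: "(\<lambda>s. L * (C * s^(Suc n))) integrable_on {0..t}"
    by (intro integrable_continuous_interval continuous_intros)
  have key: "\<bar>integral {0..t} (\<lambda>s. F (X (Suc n) s) (Y (Suc n) s)) - integral {0..t} (\<lambda>s. F (X n s) (Y n s))\<bar>
      \<le> L * C * t^(Suc (Suc n)) / Suc (Suc n)"
    if lipF: "\<And>p q p' q'. \<bar>F p q - F p' q'\<bar> \<le> L*(\<bar>p-p'\<bar>+\<bar>q-q'\<bar>)"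
      and cF1: "continuous_on {0..t} (\<lambda>s. F (X (Suc n) s) (Y (Suc n) s))"
      and cF0: "continuous_on {0..t} (\<lambda>s. F (X n s) (Y n s))" for F
  proof -
    have "\<bar>integral {0..t} (\<lambda>s. F (X (Suc n) s) (Y (Suc n) s)) - integral {0..t} (\<lambda>s. F (X n s) (Y n s))\<bar>
       = norm (integral {0..t} (\<lambda>s. F (X (Suc n) s) (Y (Suc n) s) - F (X n s) (Y n s)))"
      using Henstock_Kurzweil_Integration.integral_diff[OF integrable_continuous_interval[OF cF1] integrable_continuous_interval[OF cF0]]
      by (simp only: real_norm_def)
    also have "\<dots> \<le> integral {0..t} (\<lambda>s. L * (C * s^(Suc n)))"
    proof (rule integral_norm_bound_integral)
      show "(\<lambda>s. F (X (Suc n) s) (Y (Suc n) s) - F (X n s) (Y n s)) integrable_on {0..t}"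
        by (intro integrable_continuous_interval continuous_intros cF1 cF0)
      show "(\<lambda>s. L * (C * s^(Suc n))) integrable_on {0..t}" by (rule i1)
      fix s assume s: "s \<in> {0..t}"
      have "norm (F (X (Suc n) s) (Y (Suc n) s) - F (X n s) (Y n s)) \<le> L*(\<bar>X (Suc n) s - X n s\<bar> + \<bar>Y (Suc n) s - Y n s\<bar>)"
        using lipF by simp
      also have "\<dots> \<le> L * (C * s^(Suc n))"
        using bnd[OF s] L by (intro mult_left_mono) auto
      finally show "norm (F (X (Suc n) s) (Y (Suc n) s) - F (X n s) (Y n s)) \<le> L * (C * s^(Suc n))" .
    qed
    finally show ?thesis using ie by simp
  qed
  have "\<bar>X (Suc (Suc n)) t - X (Suc n) t\<bar> + \<bar>Y (Suc (Suc n)) t - Y (Suc n) t\<bar>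
     \<le> L * C * t^(Suc (Suc n)) / Suc (Suc n) + L * C * t^(Suc (Suc n)) / Suc (Suc n)"
    using key[OF lipf conjunct1[OF c1] conjunct1[OF c0]] key[OF lipg conjunct2[OF c1] conjunct2[OF c0]]
    by (simp only: pic.simps fst_conv snd_conv add_diff_cancel_left)
  also have "\<dots> = M0 * (2*L)^(Suc n) * t^(Suc (Suc n)) / fact (Suc (Suc n))"
    unfolding C_def by (simp add: field_simps del: of_nat_Suc)
  finally show ?case .
qed

definition "bn n = M0 * (2*L)^n * T^(Suc n) / fact (Suc n)"

lemma bn_summable: "summable bn"
proof (rule summable_comparison_test)
  show "summable (\<lambda>n. (M0 * T) * (inverse (fact n) * (2*L*T)^n))"
    by (intro summable_mult summable_exp)
  have M0: "M0 \<ge> 0" unfolding M0_def by simp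
  show "\<exists>N. \<forall>n\<ge>N. norm (bn n) \<le> (M0 * T) * (inverse (fact n) * (2*L*T)^n)"
  proof (intro exI allI impI)
    fix n :: nat
    have "fact n \<le> (fact (Suc n) :: real)" by (rule fact_mono) simp
    then have "inverse (fact (Suc n)) \<le> (inverse (fact n) :: real)"
      by (intro le_imp_inverse_le) auto
    then have "M0 * (2*L*T)^n * T * inverse (fact (Suc n)) \<le> M0 * (2*L*T)^n * T * inverse (fact n)"
      using M0 L T by (intro mult_left_mono) auto
    moreover have "bn n \<ge> 0" unfolding bn_def using M0 L T by auto
    moreover have "bn n = M0 * (2*L*T)^n * T * inverse (fact (Suc n))"
      unfolding bn_def power_Suc power_mult_distrib divide_inverse by (simp only: mult_ac)
    moreover have "(M0 * T) * (inverse (fact n) * (2*L*T)^n) = M0 * (2*L*T)^n * T * inverse (fact n)"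
      by (simp only: mult_ac)
    ultimately show "norm (bn n) \<le> (M0 * T) * (inverse (fact n) * (2*L*T)^n)"
      by (metis abs_of_nonneg real_norm_def)
  qed
qed

lemma est_T: "t \<in> {0..T} \<Longrightarrow> \<bar>X (Suc n) t - X n t\<bar> \<le> bn n \<and> \<bar>Y (Suc n) t - Y n t\<bar> \<le> bn n"
proof -
  assume t: "t \<in> {0..T}"
  have M0: "M0 \<ge> 0" unfolding M0_def by simp
  have "t^(Suc n) \<le> T^(Suc n)" using t by (intro power_mono) auto
  then have "M0 * (2*L)^n * t^(Suc n) / fact (Suc n) \<le> bn n"
    unfolding bn_def using M0 L by (intro divide_right_mono mult_left_mono) auto
  with pic_est[OF t, of n] show ?thesis by auto
qed

definition "xs t = a + (\<Sum>k. X (Suc k) t - X k t)"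
definition "ys t = b + (\<Sum>k. Y (Suc k) t - Y k t)"
definition "rr n = suminf bn - (\<Sum>k<n. bn k)"

lemma rr_lim: "rr \<longlonglongrightarrow> 0"
proof -
  have "(\<lambda>n. suminf bn - (\<Sum>k<n. bn k)) \<longlonglongrightarrow> suminf bn - suminf bn"
    by (intro tendsto_diff tendsto_const summable_LIMSEQ bn_summable)
  then show ?thesis unfolding rr_def by simp
qed

lemma err: "t \<in> {0..T} \<Longrightarrow> \<bar>xs t - X n t\<bar> \<le> rr n \<and> \<bar>ys t - Y n t\<bar> \<le> rr n"
proof -
  assume t: "t \<in> {0..T}"
  have x1: "X n t = a + (\<Sum>k<n. X (Suc k) t - X k t)"
    using sum_lessThan_telescope[of "\<lambda>k. X k t" n] by simp
  have y1: "Y n t = b + (\<Sum>k<n. Y (Suc k) t - Y k t)"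
    using sum_lessThan_telescope[of "\<lambda>k. Y k t" n] by simp
  have x2: "\<bar>(\<Sum>k. X (Suc k) t - X k t) - (\<Sum>k<n. X (Suc k) t - X k t)\<bar> \<le> rr n"
    unfolding rr_def using est_T[OF t] bn_summable by (intro tail_bound) blast+
  have y2: "\<bar>(\<Sum>k. Y (Suc k) t - Y k t) - (\<Sum>k<n. Y (Suc k) t - Y k t)\<bar> \<le> rr n"
    unfolding rr_def using est_T[OF t] bn_summable by (intro tail_bound) blast+
  have "xs t - X n t = (\<Sum>k. X (Suc k) t - X k t) - (\<Sum>k<n. X (Suc k) t - X k t)"
    unfolding xs_def by (subst x1) (simp only: add_diff_cancel_left)
  moreover have "ys t - Y n t = (\<Sum>k. Y (Suc k) t - Y k t) - (\<Sum>k<n. Y (Suc k) t - Y k t)"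
    unfolding ys_def by (subst y1) (simp only: add_diff_cancel_left)
  ultimately show ?thesis using x2 y2 by simp
qed

lemma ul_cont:
  assumes "\<And>n. continuous_on {0..T} (F n)" "\<And>n t. t \<in> {0..T} \<Longrightarrow> \<bar>G t - F n t\<bar> \<le> rr n"
  shows "continuous_on {0..T} G"
proof (rule uniform_limit_theorem[where F=sequentially and f=F])
  show "\<forall>\<^sub>F n in sequentially. continuous_on {0..T} (F n)" using assms(1) by simp
  show "uniform_limit {0..T} F G sequentially"
    unfolding uniform_limit_iff
  proof (intro allI impI)
    fix e :: real assume e: "e > 0"
    have "\<forall>\<^sub>F n in sequentially. rr n < e" using order_tendstoD(2)[OF rr_lim e] .
    then show "\<forall>\<^sub>F n in sequentially. \<forall>t\<in>{0..T}. dist (F n t) (G t) < e"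
    proof (rule eventually_mono)
      fix n assume "rr n < e"
      then show "\<forall>t\<in>{0..T}. dist (F n t) (G t) < e"
        using assms(2) by (smt (verit) dist_real_def)
    qed
  qed
qed simp

lemma xs_cont: "continuous_on {0..T} xs" and ys_cont: "continuous_on {0..T} ys"
  using ul_cont[of "X" xs] ul_cont[of "Y" ys] pic_cont err by auto

lemma int_eq:
  assumes lipF: "\<And>p q p' q'. \<bar>F p q - F p' q'\<bar> \<le> L*(\<bar>p-p'\<bar>+\<bar>q-q'\<bar>)"
    and t: "t \<in> {0..T}"
    and cF: "\<And>n. continuous_on {0..t} (\<lambda>s. F (X n s) (Y n s))"
  shows "\<bar>integral {0..t} (\<lambda>s. F (X n s) (Y n s)) - integral {0..t} (\<lambda>s. F (xs s) (ys s))\<bar> \<le> L * T * (2 * rr n)"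
proof -
  have c: "continuous_on {0..t} (\<lambda>s. F (xs s) (ys s))"
    using t by (intro lip_cont[OF lipF] continuous_on_subset[OF xs_cont] continuous_on_subset[OF ys_cont]) auto
  have "\<bar>integral {0..t} (\<lambda>s. F (X n s) (Y n s)) - integral {0..t} (\<lambda>s. F (xs s) (ys s))\<bar>
      = norm (integral {0..t} (\<lambda>s. F (X n s) (Y n s) - F (xs s) (ys s)))"
    using Henstock_Kurzweil_Integration.integral_diff[OF integrable_continuous_interval[OF cF] integrable_continuous_interval[OF c]]
    by (simp only: real_norm_def)
  also have "\<dots> \<le> integral {0..t} (\<lambda>s. L * (2 * rr n))"
  proof (rule integral_norm_bound_integral)
    show "(\<lambda>s. F (X n s) (Y n s) - F (xs s) (ys s)) integrable_on {0..t}"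
      by (intro integrable_continuous_interval continuous_intros cF c)
    show "(\<lambda>s. L * (2 * rr n)) integrable_on {0..t}" by (intro integrable_continuous_interval continuous_intros)
    fix s assume s: "s \<in> {0..t}"
    then have s': "s \<in> {0..T}" using t by auto
    have "norm (F (X n s) (Y n s) - F (xs s) (ys s)) \<le> L*(\<bar>X n s - xs s\<bar> + \<bar>Y n s - ys s\<bar>)"
      using lipF by simp
    also have "\<dots> \<le> L * (2 * rr n)"
      using err[OF s', of n] L by (intro mult_left_mono) auto
    finally show "norm (F (X n s) (Y n s) - F (xs s) (ys s)) \<le> L * (2 * rr n)" .
  qed
  also have "\<dots> = t * (L * (2 * rr n))" using t by simp
  also have "\<dots> \<le> T * (L * (2 * rr n))"
  proof (rule mult_right_mono)
    show "t \<le> T" using t by simp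
    have "0 \<le> \<bar>xs t - X n t\<bar>" by simp
    then have "rr n \<ge> 0" using err[OF t, of n] by linarith
    then show "0 \<le> L * (2 * rr n)" using L by simp
  qed
  finally show ?thesis by (simp add: mult_ac)
qed

lemma zero_lim: "(\<And>n. \<bar>c\<bar> \<le> z n) \<Longrightarrow> z \<longlonglongrightarrow> 0 \<Longrightarrow> c = (0::real)"
  using LIMSEQ_le_const[of z 0 "\<bar>c\<bar>"] by auto

lemma fix_eq:
  assumes t: "t \<in> {0..T}"
  shows "xs t = a + integral {0..t} (\<lambda>s. f (xs s) (ys s)) \<and> ys t = b + integral {0..t} (\<lambda>s. g (xs s) (ys s))"
proof -
  have tT: "t \<le> T" using t by simp
  have z: "(\<lambda>n. rr (Suc n) + L * T * (2 * rr n)) \<longlonglongrightarrow> 0"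
    using tendsto_add[OF LIMSEQ_Suc[OF rr_lim] tendsto_mult[OF tendsto_const[of "L*T"] tendsto_mult[OF tendsto_const[of 2] rr_lim]]]
    by simp
  have "xs t - (a + integral {0..t} (\<lambda>s. f (xs s) (ys s))) = 0"
  proof (rule zero_lim[OF _ z])
    fix n
    have e1: "\<bar>xs t - X (Suc n) t\<bar> \<le> rr (Suc n)" using err[OF t] by blast
    have e2: "\<bar>integral {0..t} (\<lambda>s. f (X n s) (Y n s)) - integral {0..t} (\<lambda>s. f (xs s) (ys s))\<bar> \<le> L * T * (2 * rr n)"
      by (rule int_eq[OF lipf t]) (use cf_sub[OF tT] in blast)
    have "X (Suc n) t = a + integral {0..t} (\<lambda>s. f (X n s) (Y n s))" by simp
    then show "\<bar>xs t - (a + integral {0..t} (\<lambda>s. f (xs s) (ys s)))\<bar> \<le> rr (Suc n) + L * T * (2 * rr n)"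
      using e1 e2 by linarith
  qed
  moreover have "ys t - (b + integral {0..t} (\<lambda>s. g (xs s) (ys s))) = 0"
  proof (rule zero_lim[OF _ z])
    fix n
    have e1: "\<bar>ys t - Y (Suc n) t\<bar> \<le> rr (Suc n)" using err[OF t] by blast
    have e2: "\<bar>integral {0..t} (\<lambda>s. g (X n s) (Y n s)) - integral {0..t} (\<lambda>s. g (xs s) (ys s))\<bar> \<le> L * T * (2 * rr n)"
      by (rule int_eq[OF lipg t]) (use cf_sub[OF tT] in blast)
    have "Y (Suc n) t = b + integral {0..t} (\<lambda>s. g (X n s) (Y n s))" by simp
    then show "\<bar>ys t - (b + integral {0..t} (\<lambda>s. g (xs s) (ys s)))\<bar> \<le> rr (Suc n) + L * T * (2 * rr n)"
      using e1 e2 by linarith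
  qed
  ultimately show ?thesis by simp
qed

lemma picard_exists:
  "\<exists>x y. x 0 = a \<and> y 0 = b \<and> (\<forall>t\<in>{0..T}. (x has_real_derivative f (x t) (y t)) (at t within {0..T}) \<and>
       (y has_real_derivative g (x t) (y t)) (at t within {0..T}))"
proof -
  define x where "x t = a + integral {0..t} (\<lambda>s. f (xs s) (ys s))" for t
  define y where "y t = b + integral {0..t} (\<lambda>s. g (xs s) (ys s))" for t
  have cf: "continuous_on {0..T} (\<lambda>s. f (xs s) (ys s))" by (intro lip_cont[OF lipf] xs_cont ys_cont)
  have cg: "continuous_on {0..T} (\<lambda>s. g (xs s) (ys s))" by (intro lip_cont[OF lipg] xs_cont ys_cont)
  have 0: "x 0 = a" "y 0 = b" unfolding x_def y_def by simp_all
  have "(x has_real_derivative f (x t) (y t)) (at t within {0..T}) \<and> (y has_real_derivative g (x t) (y t)) (at t within {0..T})"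
    if t: "t \<in> {0..T}" for t
  proof -
    have xt: "x t = xs t" and yt: "y t = ys t" using fix_eq[OF t] unfolding x_def y_def by auto
    have dx: "(x has_real_derivative f (xs t) (ys t)) (at t within {0..T})"
      unfolding x_def[abs_def] using DERIV_add[OF DERIV_const integral_has_real_derivative[OF cf t]] by simp
    have dy: "(y has_real_derivative g (xs t) (ys t)) (at t within {0..T})"
      unfolding y_def[abs_def] using DERIV_add[OF DERIV_const integral_has_real_derivative[OF cg t]] by simp
    show ?thesis using dx dy xt yt by simp
  qed
  with 0 show ?thesis by blast
qed

end



lemma cont_left:
  fixes h :: "real \<Rightarrow> real"
  assumes c: "isCont h t1" and t1: "0 < t1" and b: "\<And>s. 0 \<le> s \<Longrightarrow> s < t1 \<Longrightarrow> h s < 0"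
  shows "h t1 \<le> 0"
proof (rule ccontr)
  assume "\<not> h t1 \<le> 0"
  then have "0 < h t1" by simp
  from LIM_fun_gt_zero[OF c[unfolded isCont_def] this] obtain r where r: "0 < r"
    and rr: "\<And>x. x \<noteq> t1 \<and> \<bar>t1 - x\<bar> < r \<longrightarrow> 0 < h x" by blast
  define s where "s = t1 - min r t1 / 2"
  have "0 < h s" using rr[of s] r t1 unfolding s_def by auto
  moreover have "h s < 0" using b[of s] r t1 unfolding s_def by auto
  ultimately show False by simp
qed

lemma first_touch:
  fixes g :: "real \<Rightarrow> real"
  assumes der: "(g has_real_derivative D) (at t1)" and D: "D < 0" and t1: "0 < t1"
    and g0: "0 \<le> g t1" and b: "\<And>s. 0 \<le> s \<Longrightarrow> s < t1 \<Longrightarrow> g s < 0"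
  shows False
proof -
  obtain d where d: "d > 0" and dd: "\<And>h. h > 0 \<Longrightarrow> h < d \<Longrightarrow> g t1 < g (t1 - h)"
    using DERIV_neg_dec_left[OF der D] by blast
  define h where "h = min d t1 / 2"
  have "g t1 < g (t1 - h)" using dd[of h] d t1 unfolding h_def by auto
  moreover have "g (t1 - h) < 0" using b[of "t1 - h"] d t1 unfolding h_def by auto
  ultimately show False using g0 by simp
qed

definition cl :: "real \<Rightarrow> real" where "cl p = max (-1) (min 1 p)"
definition F1 :: "real \<Rightarrow> real \<Rightarrow> real" where "F1 p q = - cl p + (cl p)^2 + (cl q)^2"
definition F2 :: "real \<Rightarrow> real \<Rightarrow> real" where "F2 p q = cl q * (cl p + cl q)"

lemma cl_lip: "\<bar>cl p - cl p'\<bar> \<le> \<bar>p - p'\<bar>" and cl_bd: "\<bar>cl p\<bar> \<le> 1"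
  and cl_id: "\<bar>p\<bar> \<le> 1 \<Longrightarrow> cl p = p"
  unfolding cl_def by auto

lemma sq_lip: "\<bar>u\<bar> \<le> 1 \<Longrightarrow> \<bar>u'\<bar> \<le> 1 \<Longrightarrow> \<bar>u^2 - u'^2\<bar> \<le> 2 * \<bar>u - u'\<bar>"
  for u u' :: real
proof -
  assume h: "\<bar>u\<bar> \<le> 1" "\<bar>u'\<bar> \<le> 1"
  have "\<bar>u^2 - u'^2\<bar> = \<bar>u + u'\<bar> * \<bar>u - u'\<bar>"
    by (simp add: power2_eq_square abs_mult[symmetric] algebra_simps)
  also have "\<dots> \<le> 2 * \<bar>u - u'\<bar>" using h by (intro mult_right_mono) auto
  finally show ?thesis .
qed

lemma prod_lip: "\<bar>w\<bar> \<le> 1 \<Longrightarrow> \<bar>u'\<bar> \<le> 1 \<Longrightarrow> \<bar>w * u - w' * u'\<bar> \<le> \<bar>u - u'\<bar> + \<bar>w - w'\<bar>"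
  for u u' w w' :: real
proof -
  assume h: "\<bar>w\<bar> \<le> 1" "\<bar>u'\<bar> \<le> 1"
  have "w * u - w' * u' = w*(u-u') + u'*(w - w')" by (simp add: algebra_simps)
  then have "\<bar>w * u - w' * u'\<bar> \<le> \<bar>w\<bar>*\<bar>u-u'\<bar> + \<bar>u'\<bar>*\<bar>w - w'\<bar>" by (simp add: abs_mult[symmetric] abs_triangle_ineq)
  also have "\<dots> \<le> 1*\<bar>u-u'\<bar> + 1*\<bar>w - w'\<bar>"
    using h by (intro add_mono mult_right_mono) auto
  finally show ?thesis by simp
qed

lemma F1_lip: "\<bar>F1 p q - F1 p' q'\<bar> \<le> 3*(\<bar>p-p'\<bar>+\<bar>q-q'\<bar>)"
proof -
  have "\<bar>F1 p q - F1 p' q'\<bar> \<le> \<bar>cl p - cl p'\<bar> + \<bar>(cl p)^2 - (cl p')^2\<bar> + \<bar>(cl q)^2 - (cl q')^2\<bar>"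
    unfolding F1_def by linarith
  also have "\<dots> \<le> \<bar>cl p - cl p'\<bar> + 2*\<bar>cl p - cl p'\<bar> + 2*\<bar>cl q - cl q'\<bar>"
    using sq_lip[OF cl_bd cl_bd] by (intro add_mono) auto
  also have "\<dots> \<le> 3*(\<bar>p-p'\<bar>+\<bar>q-q'\<bar>)" using cl_lip[of p p'] cl_lip[of q q'] abs_ge_zero[of "p-p'"] abs_ge_zero[of "q-q'"] by argo
  finally show ?thesis .
qed

lemma F2_lip: "\<bar>F2 p q - F2 p' q'\<bar> \<le> 3*(\<bar>p-p'\<bar>+\<bar>q-q'\<bar>)"
proof -
  have "\<bar>F2 p q - F2 p' q'\<bar> \<le> \<bar>cl q * cl p - cl q' * cl p'\<bar> + \<bar>(cl q)^2 - (cl q')^2\<bar>"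
    unfolding F2_def by (simp add: power2_eq_square algebra_simps)
  also have "\<dots> \<le> (\<bar>cl p - cl p'\<bar> + \<bar>cl q - cl q'\<bar>) + 2*\<bar>cl q - cl q'\<bar>"
    using sq_lip[OF cl_bd cl_bd] prod_lip[OF cl_bd cl_bd] by (intro add_mono) auto
  also have "\<dots> \<le> 3*(\<bar>p-p'\<bar>+\<bar>q-q'\<bar>)" using cl_lip[of p p'] cl_lip[of q q'] abs_ge_zero[of "p-p'"] abs_ge_zero[of "q-q'"] by argo
  finally show ?thesis .
qed

lemma arith1:
  fixes u d Q :: real
  assumes u: "0 < u" "u \<le> 1/100" and d: "0 < d" "d \<le> 1/100" and Q: "\<bar>Q\<bar> \<le> 2*d"
  shows "- (2*u + 16*d^2) + (2*u + 16*d^2)^2 + Q^2 + u < 0"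
proof -
  define A where "A = 2*u + 16*d^2"
  have "d^2 \<le> (1/100)^2" using d by (intro power_mono) auto
  then have "d^2 \<le> 1/10000" by (simp add: power2_eq_square)
  then have A1: "A \<le> 1/40" using u unfolding A_def by linarith
  have A0: "0 \<le> A" using u unfolding A_def by simp
  have "A^2 \<le> A * (1/40)" unfolding power2_eq_square using A0 A1 by (intro mult_left_mono) auto
  moreover have "Q^2 \<le> (2*d)^2" using Q by (metis abs_le_square_iff abs_of_pos d(1) mult_pos_pos zero_less_numeral)
  then have "Q^2 \<le> 4*d^2" by (simp add: power_mult_distrib)
  moreover have "0 \<le> d^2" by simp
  ultimately show ?thesis using u d unfolding A_def by argo
qed

lemma arith3:
  fixes u d P B :: real
  assumes u: "0 < u" "u \<le> 1/100" and d: "0 < d" "d \<le> 1/100" and B: "0 \<le> B" "B \<le> 2*d"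
    and P: "P \<le> 2*u + 16*d^2"
  shows "B * (P + B) < d * (4*u + 5*d)"
proof -
  define A where "A = 2*u + 16*d^2"
  have A0: "0 \<le> A" using u unfolding A_def by simp
  have "B * (P + B) \<le> B * (A + B)" using B P unfolding A_def by (intro mult_left_mono) auto
  also have "\<dots> \<le> (2*d) * (A + B)" using B A0 by (intro mult_right_mono) auto
  also have "\<dots> \<le> (2*d) * (A + 2*d)" using B d by (intro mult_left_mono) auto
  also have "\<dots> = 4*d*u + 32*d^2*d + 4*d^2" unfolding A_def by (simp add: algebra_simps power2_eq_square)
  also have "\<dots> < 4*d*u + 5*d^2"
  proof -
    have "d^2 * (32*d) < d^2 * 1" using d by (intro mult_strict_left_mono) auto
    then show ?thesis by (simp add: algebra_simps)
  qed
  finally show ?thesis by (simp add: algebra_simps power2_eq_square)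
qed



lemma main:
  fixes e d x0 y0 :: real
  assumes d: "0 < d" and de: "d \<le> e" and e: "e \<le> 1/100" and x0: "\<bar>x0\<bar> \<le> e" and y0: "\<bar>y0\<bar> \<le> d"
  shows "\<exists>T \<ge> (1/10) / d. \<exists>x y :: real \<Rightarrow> real. x 0 = x0 \<and> y 0 = y0 \<and> solves_on T x y"
proof -
  define T where "T = (1/10) / d"
  have T0: "0 \<le> T" unfolding T_def using d by simp
  obtain x y where xi: "x 0 = x0" and yi: "y 0 = y0"
    and der: "\<And>t. t \<in> {0..T+1} \<Longrightarrow> (x has_real_derivative F1 (x t) (y t)) (at t within {0..T+1}) \<and>
       (y has_real_derivative F2 (x t) (y t)) (at t within {0..T+1})"
    using picard_exists[where f=F1 and g=F2 and L=3 and a=x0 and b=y0 and T="T+1"] F1_lip F2_lip T0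
    by auto
  have "continuous_on {0..T+1} x" "continuous_on {0..T+1} y"
    unfolding continuous_on_eq_continuous_within using der DERIV_continuous by blast+
  then have cx: "continuous_on {0..T} x" and cy: "continuous_on {0..T} y"
    by (auto elim!: continuous_on_subset)
  define A where "A t = 2*e*exp(-t/2) + 16*d^2" for t
  define B where "B t = d*(11/10 + 8*e*(1 - exp(-t/2)) + 5*d*t)" for t
  have dA: "(A has_real_derivative (- (e*exp(-t/2)))) (at t)" for t
    unfolding A_def[abs_def] by (auto intro!: derivative_eq_intros)
  have dB: "(B has_real_derivative d*(4*e*exp(-t/2) + 5*d)) (at t)" for t
    unfolding B_def[abs_def] by (auto intro!: derivative_eq_intros simp: algebra_simps)
  have cA: "continuous_on S A" for S unfolding A_def by (intro continuous_intros) auto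
  have cB: "continuous_on S B" for S unfolding B_def by (intro continuous_intros) auto
  have bnds: "0 < e*exp(-t/2) \<and> e*exp(-t/2) \<le> 1/100 \<and> 0 \<le> B t \<and> B t \<le> 2*d \<and> A t \<le> 1 \<and> B t \<le> 1"
    if t: "t \<in> {0..T}" for t
  proof -
    have ex: "0 < exp(-t/2)" "exp(-t/2) \<le> 1" using t by auto
    have "t \<le> (1/10)/d" using t unfolding T_def by simp
    then have "d*t \<le> d*((1/10)/d)" using d by (intro mult_left_mono) auto
    then have dt: "d*t \<le> 1/10" using d by simp
    have dt0: "0 \<le> d*t" using t d by simp
    have e0: "0 < e" using d de by simp
    have m1: "e*exp(-t/2) \<le> e*1" using ex e0 by (intro mult_left_mono) auto
    have m2: "e*(1 - exp(-t/2)) \<le> e*1" using ex e0 by (intro mult_left_mono) auto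
    have m3: "0 \<le> e*(1 - exp(-t/2))" using ex e0 by simp
    have u: "0 < e*exp(-t/2)" "e*exp(-t/2) \<le> 1/100"
      using e0 apply simp using m1 e by linarith
    have q: "0 \<le> e*(1 - exp(-t/2))" "e*(1 - exp(-t/2)) \<le> 1/100"
      using m3 apply simp using m2 e by linarith
    have "B t = d*(11/10 + 8*(e*(1 - exp(-t/2))) + 5*(d*t))" unfolding B_def by (simp add: algebra_simps)
    moreover have "11/10 + 8*(e*(1 - exp(-t/2))) + 5*(d*t) \<le> 2" "0 \<le> 11/10 + 8*(e*(1 - exp(-t/2))) + 5*(d*t)"
      using q dt dt0 by auto
    ultimately have B: "0 \<le> B t" "B t \<le> 2*d"
      using d mult_left_mono[of "11/10 + 8*(e*(1 - exp(-t/2))) + 5*(d*t)" 2 d] by auto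
    have "d^2 \<le> d" using d de e by (simp add: power2_eq_square mult_le_cancel_left1)
    then have "A t \<le> 1" unfolding A_def using u d de e by linarith
    then show ?thesis using u B d de e by auto
  qed
  have good: "\<forall>t\<in>{0..T}. \<bar>x t\<bar> < A t \<and> \<bar>y t\<bar> < B t"
  proof (rule ccontr)
    assume nb: "\<not> (\<forall>t\<in>{0..T}. \<bar>x t\<bar> < A t \<and> \<bar>y t\<bar> < B t)"
    define Bad where "Bad = {t\<in>{0..T}. (\<lambda>t. 0) t \<le> (\<lambda>t. x t - A t) t} \<union> {t\<in>{0..T}. (\<lambda>t. 0) t \<le> (\<lambda>t. - x t - A t) t}
       \<union> {t\<in>{0..T}. (\<lambda>t. 0) t \<le> (\<lambda>t. y t - B t) t} \<union> {t\<in>{0..T}. (\<lambda>t. 0) t \<le> (\<lambda>t. - y t - B t) t}"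
    have Bad_iff: "t \<in> Bad \<longleftrightarrow> t \<in> {0..T} \<and> \<not> (\<bar>x t\<bar> < A t \<and> \<bar>y t\<bar> < B t)" for t
      unfolding Bad_def by auto
    have ne: "Bad \<noteq> {}" using nb Bad_iff by blast
    have cl: "closed Bad" unfolding Bad_def
      by (intro closed_Un continuous_on_closed_Collect_le continuous_intros cx cy cA cB closed_atLeastAtMost)
    have bb: "bdd_below Bad" unfolding Bad_def by (rule bdd_belowI[of _ 0]) auto
    define t1 where "t1 = Inf Bad"
    have t1B: "t1 \<in> Bad" unfolding t1_def using closed_contains_Inf[OF ne bb cl] .
    have below: "\<bar>x s\<bar> < A s \<and> \<bar>y s\<bar> < B s" if "0 \<le> s" "s < t1" for s
    proof -
      have "s \<notin> Bad" using cInf_lower[OF _ bb, of s] that unfolding t1_def by force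
      moreover have "s \<le> T" using t1B that Bad_iff by auto
      ultimately show ?thesis using Bad_iff that by auto
    qed
    have t1T: "0 \<le> t1" "t1 \<le> T" using t1B Bad_iff by auto
    have "0 \<notin> Bad"
    proof -
      have "\<bar>x 0\<bar> < A 0" using xi x0 d de zero_le_power2[of d] unfolding A_def by (simp; linarith)
      moreover have "\<bar>y 0\<bar> < B 0" using yi y0 d unfolding B_def by simp
      ultimately show ?thesis using Bad_iff by auto
    qed
    then have t1p: "0 < t1" using t1B t1T by (cases "t1 = 0") auto
    have int: "t1 \<in> interior {0..T+1}" using t1p t1T by auto
    have dx: "(x has_real_derivative F1 (x t1) (y t1)) (at t1)"
      and dy: "(y has_real_derivative F2 (x t1) (y t1)) (at t1)"
      using der[of t1] t1T at_within_interior[OF int] by auto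
    have g1: "((\<lambda>t. x t - A t) has_real_derivative F1 (x t1) (y t1) + e*exp(-t1/2)) (at t1)"
      using DERIV_diff[OF dx dA] by simp
    have g2: "((\<lambda>t. - x t - A t) has_real_derivative - F1 (x t1) (y t1) + e*exp(-t1/2)) (at t1)"
      using DERIV_diff[OF DERIV_minus[OF dx] dA] by simp
    have g3: "((\<lambda>t. y t - B t) has_real_derivative F2 (x t1) (y t1) - d*(4*e*exp(-t1/2) + 5*d)) (at t1)"
      using DERIV_diff[OF dy dB] by simp
    have g4: "((\<lambda>t. - y t - B t) has_real_derivative - F2 (x t1) (y t1) - d*(4*e*exp(-t1/2) + 5*d)) (at t1)"
      using DERIV_diff[OF DERIV_minus[OF dy] dB] by simp
    have le1: "x t1 - A t1 \<le> 0" using cont_left[OF DERIV_isCont[OF g1] t1p] below by force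
    have le2: "- x t1 - A t1 \<le> 0" using cont_left[OF DERIV_isCont[OF g2] t1p] below by force
    have le3: "y t1 - B t1 \<le> 0" using cont_left[OF DERIV_isCont[OF g3] t1p] below by force
    have le4: "- y t1 - B t1 \<le> 0" using cont_left[OF DERIV_isCont[OF g4] t1p] below by force
    have bt: "0 < e*exp(-t1/2) \<and> e*exp(-t1/2) \<le> 1/100 \<and> 0 \<le> B t1 \<and> B t1 \<le> 2*d \<and> A t1 \<le> 1 \<and> B t1 \<le> 1"
      using bnds t1T by auto
    have clx: "cl (x t1) = x t1" and cly: "cl (y t1) = y t1" using le1 le2 le3 le4 bt by (auto intro!: cl_id)
    have F1e: "F1 (x t1) (y t1) = - x t1 + (x t1)^2 + (y t1)^2" unfolding F1_def clx cly ..
    have F2e: "F2 (x t1) (y t1) = y t1 * (x t1 + y t1)" unfolding F2_def clx cly ..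
    define u where "u = e*exp(-t1/2)"
    have Au: "A t1 = 2*u + 16*d^2" unfolding A_def u_def by simp
    have u: "0 < u" "u \<le> 1/100" using bt unfolding u_def by auto
    have d1: "d \<le> 1/100" using de e by simp
    have ya: "\<bar>y t1\<bar> \<le> 2*d" using le3 le4 bt by auto
    have "\<not> (\<bar>x t1\<bar> < A t1 \<and> \<bar>y t1\<bar> < B t1)" using t1B Bad_iff by auto
    then consider "x t1 - A t1 = 0" | "- x t1 - A t1 = 0" | "y t1 - B t1 = 0" | "- y t1 - B t1 = 0"
      using le1 le2 le3 le4 by linarith
    then show False
    proof cases
      case 1
      have "F1 (x t1) (y t1) + e*exp(-t1/2) < 0"
        using arith1[OF u d d1 ya] 1 unfolding F1e u_def[symmetric] Au by (simp add: algebra_simps)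
      then show False using first_touch[OF g1 _ t1p] 1 below by force
    next
      case 2
      have "- F1 (x t1) (y t1) + e*exp(-t1/2) < 0"
        using 2 u d unfolding F1e u_def[symmetric] Au by (simp add: algebra_simps)
          (smt (verit) zero_le_power2)
      then show False using first_touch[OF g2 _ t1p] 2 below by force
    next
      case 3
      have "y t1 * (x t1 + y t1) < d * (4*u + 5*d)"
        using arith3[OF u d d1, of "B t1" "x t1"] 3 bt le1 Au by simp
      then have "F2 (x t1) (y t1) - d*(4*e*exp(-t1/2) + 5*d) < 0"
        unfolding F2e u_def by (simp add: mult.assoc)
      then show False using first_touch[OF g3 _ t1p] 3 below by force
    next
      case 4
      have yB: "y t1 = - B t1" using 4 by simp
      have "B t1 * ((x t1 - 2 * B t1) + B t1) < d * (4*u + 5*d)"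
        using bt le1 Au by (intro arith3[OF u d d1]) auto
      then have "- (y t1 * (x t1 + y t1)) < d * (4*u + 5*d)" unfolding yB by (simp add: algebra_simps)
      then have "- F2 (x t1) (y t1) - d*(4*e*exp(-t1/2) + 5*d) < 0"
        unfolding F2e u_def by (simp add: mult.assoc)
      then show False using first_touch[OF g4 _ t1p] 4 below by force
    qed
  qed
  have "solves_on T x y"
    unfolding solves_on_def
  proof
    fix t assume t: "t \<in> {0..T}"
    have t': "t \<in> {0..T+1}" using t by auto
    have sub: "{0..T} \<subseteq> {0..T+1}" by auto
    have bt: "A t \<le> 1 \<and> B t \<le> 1" using bnds[OF t] by auto
    have gt: "\<bar>x t\<bar> < A t \<and> \<bar>y t\<bar> < B t" using good t by blast
    have clx: "cl (x t) = x t" and cly: "cl (y t) = y t" using gt bt by (auto intro!: cl_id)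
    have F1e: "F1 (x t) (y t) = - x t + (x t)^2 + (y t)^2" unfolding F1_def clx cly ..
    have F2e: "F2 (x t) (y t) = y t * (x t + y t)" unfolding F2_def clx cly ..
    show "(x has_real_derivative (- x t + (x t)^2 + (y t)^2)) (at t within {0..T}) \<and>
        (y has_real_derivative (y t * (x t + y t))) (at t within {0..T})"
      using DERIV_subset[OF conjunct1[OF der[OF t']] sub] DERIV_subset[OF conjunct2[OF der[OF t']] sub]
      unfolding F1e F2e by simp
  qed
  then show ?thesis using xi yi unfolding T_def by blast
qed

theorem proposition1p3:
  shows "\<exists>c>0. \<exists>\<epsilon>0>0. \<forall>\<epsilon> \<delta> x0 y0 :: real.
           0 < \<delta> \<and> \<delta> \<le> \<epsilon> \<and> \<epsilon> \<le> \<epsilon>0 \<and> \<bar>x0\<bar> \<le> \<epsilon> \<and> \<bar>y0\<bar> \<le> \<delta> \<longrightarrow>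
           (\<exists>T \<ge> c / \<delta>. \<exists>x y :: real \<Rightarrow> real.
              x 0 = x0 \<and> y 0 = y0 \<and> solves_on T x y)"
proof -
  show ?thesis
    apply (rule exI[of _ "1/10"], rule conjI, simp)
    apply (rule exI[of _ "1/100"], rule conjI, simp)
    using main by blast
qed

end
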